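(* Let $f_1,\dots,f_m\in\mathbb{C}[x_1,\dots,x_n]$ with $r$ solutions, and suppose a sparse-resultant solver is given by a square matrix $$\mathbf{M}(u_0)=\begin{bmatrix}\hat{\mathbf{A}}_{11}&\hat{\mathbf{A}}_{12}\\ \mathbf{A}_{21}-u_0\mathbf{I}&\mathbf{A}_{22}\end{bmatrix}$$ as described in the context, with $\hat{\mathbf{A}}_{12}$ square invertible, $|B_1|=r$, and Schur complement $\mathbf{X}=\mathbf{A}_{21}-\mathbf{A}_{22}\hat{\mathbf{A}}_{12}^{-1}\hat{\mathbf{A}}_{11}$. Define an action-matrix solver for the action polynomial $f=x_1$ by taking the basis monomials $B_a=B_1$, the reducible monomials $B_r=\{x_1\mathbf{x}^{\beta}\mid \mathbf{x}^{\beta}\in B_1\}\setminus B_1$, the excess monomials $B_e=B_2\setminus B_r$, the same monomial multiples for $f_1,\dots,f_m$ as in the resultant construction, the same monomial ordering, and the elimination template $\hat{\mathbf{C}}=\begin{bmatrix}\hat{\mathbf{A}}_{12}&\hat{\mathbf{A}}_{11}\end{bmatrix}$ (columns indexed by $\mathbf{b}_2$ then $\mathbf{b}_1$). Let $\mathbf{M}_f$ be the resulting action matrix. Then the two solvers are equivalent: the Gauss–Jordan form of $\hat{\mathbf{C}}$ is $\begin{bmatrix}\mathbf{I}&\hat{\mathbf{A}}_{12}^{-1}\hat{\mathbf{A}}_{11}\end{bmatrix}$, so the Gauss–Jordan elimination can be replaced by the product $\hat{\mathbf{A}}_{12}^{-1}\hat{\mathbf{A}}_{11}$, and $\mathbf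{M}_f=\mathbf{X}$.
   Context: Setting of the sparse-resultant solver: $B=B_1\sqcup B_2$ is a finite set of monomials in $x_1,\dots,x_n$ with $B_1=\{\mathbf{x}^{\beta}\in B\mid x_1\mathbf{x}^{\beta}\in B\}$, ordered as vectors $\mathbf{b}_1=(\mathbf{x}^{\beta_1},\dots,\mathbf{x}^{\beta_r})$ and $\mathbf{b}_2$; the columns of $\mathbf{M}(u_0)$ are indexed by $\mathbf{b}_1$ followed by $\mathbf{b}_2$. The upper block $\begin{bmatrix}\hat{\mathbf{A}}_{11}&\hat{\mathbf{A}}_{12}\end{bmatrix}$ consists of coefficient vectors of polynomials $t f_i$ ($i\le m$, $t$ in chosen sets $T_i$ of monomials), and the $j$-th row of the lower block $\begin{bmatrix}\mathbf{A}_{21}-u_0\mathbf{I}&\mathbf{A}_{22}\end{bmatrix}$ is the coefficient vector of $\mathbf{x}^{\beta_j}(x_1-u_0)$ (extra polynomial $x_1-u_0$). It is assumed that the cosets of the monomials of $B_1$ form a linear basis of the $r$-dimensional quotient ring $\mathbb{C}[x_1,\dots,x_n]/\langle f_1,\dots,f_m\rangle$. Action matrix read-off: writing the Gauss–Jordan form of $\hat{\mathbf{C}}$ as $\begin{bmatrix}\mathbf{I}&\mathbf{G}\end{bmatrix}$ with rows of $\mathbf{G}$ indexed by the monomials of $\mathbf{b}_2$, let $\mathbf{C}'_{23}$ be the rows of $\mathbf{G}$ indexed by $B_r$; the $r\times r$ matrix $\mathbf{M}_f$ has $j$-th row equal to the $i$-th unit row vector if $x_1\mathbf{x}^{\beta_j}=\mathbf{x}^{\beta_i}\in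 B_1$, and otherwise equal to minus the row of $\mathbf{C}'_{23}$ indexed by $x_1\mathbf{x}^{\beta_j}\in B_r$. *)

theory Defs
  imports "HOL-Library.Poly_Mapping" "Jordan_Normal_Form.Gauss_Jordan_Elimination"
begin

(* Monomials x^beta in the variables x_1,...,x_n are exponent vectors  nat \<Rightarrow>\<^sub>0 nat
   (variable x_i has index i, 1 \<le> i \<le> n); multiplying monomials = adding exponents. *)
type_synonym monom = "nat \<Rightarrow>\<^sub>0 nat"
type_synonym cpoly = "monom \<Rightarrow>\<^sub>0 complex"

definition is_monom_in :: "nat \<Rightarrow> monom \<Rightarrow> bool" where
  "is_monom_in n \<beta> \<longleftrightarrow> Poly_Mapping.keys \<beta> \<subseteq> {1..n}"

definition polys_in :: "nat \<Rightarrow> cpoly set" where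
  "polys_in n = {p. \<forall>\<beta>\<in>Poly_Mapping.keys p. is_monom_in n \<beta>}"

definition mono :: "monom \<Rightarrow> cpoly" where
  "mono \<beta> = Poly_Mapping.single \<beta> 1"

definition x1m :: monom where "x1m = Poly_Mapping.single 1 1"
definition x1 :: cpoly where "x1 = mono x1m"

definition gen_ideal :: "nat \<Rightarrow> cpoly list \<Rightarrow> cpoly set" where
  "gen_ideal n fs = {\<Sum>i<length fs. g i * fs ! i | g. \<forall>i<length fs. g i \<in> polys_in n}"

definition quotient_basis :: "nat \<Rightarrow> cpoly list \<Rightarrow> monom list \<Rightarrow> bool" where
  "quotient_basis n fs bs \<longleftrightarrow> distinct bs \<and> (\<forall>\<beta>\<in>set bs. is_monom_in n \<beta>) \<and>
     (\<forall>p\<in>polys_in n. \<exists>c::nat \<Rightarrow> complex.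
        p - (\<Sum>j<length bs. Poly_Mapping.single (bs ! j) (c j)) \<in> gen_ideal n fs) \<and>
     (\<forall>c::nat \<Rightarrow> complex.
        (\<Sum>j<length bs. Poly_Mapping.single (bs ! j) (c j)) \<in> gen_ideal n fs
          \<longrightarrow> (\<forall>j<length bs. c j = 0))"

definition coeff_mat :: "cpoly list \<Rightarrow> monom list \<Rightarrow> complex mat" where
  "coeff_mat ps cs = mat (length ps) (length cs) (\<lambda>(i,j). Poly_Mapping.lookup (ps ! i) (cs ! j))"

definition upper_polys :: "cpoly list \<Rightarrow> (nat \<times> monom) list \<Rightarrow> cpoly list" where
  "upper_polys fs rws = map (\<lambda>(i,t). mono t * fs ! i) rws"

(* lower block: the j-th row is the coefficient vector of x^beta_j (x_1 - u_0);
   its b1-part is A21 - u0 I and its b2-part is A22, where A21, A22 are the coefficient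
   matrices of x_1 x^beta_j *)
definition lower_polys :: "monom list \<Rightarrow> cpoly list" where
  "lower_polys b1 = map (\<lambda>\<beta>. x1 * mono \<beta>) b1"

definition res_mat :: "cpoly list \<Rightarrow> (nat \<times> monom) list \<Rightarrow> monom list \<Rightarrow> monom list \<Rightarrow> complex \<Rightarrow> complex mat" where
  "res_mat fs rws b1 b2 u0 =
     coeff_mat (upper_polys fs rws @ map (\<lambda>\<beta>. mono \<beta> * (x1 - Poly_Mapping.single 0 u0)) b1) (b1 @ b2)"

definition hcat :: "complex mat \<Rightarrow> complex mat \<Rightarrow> complex mat" where
  "hcat A B = mat (dim_row A) (dim_col A + dim_col B)
     (\<lambda>(i,j). if j < dim_col A then A $$ (i,j) else B $$ (i, j - dim_col A))"

definition inv_m :: "complex mat \<Rightarrow> complex mat" where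
  "inv_m A = (THE B. B \<in> carrier_mat (dim_row A) (dim_row A) \<and>
                    A * B = 1\<^sub>m (dim_row A) \<and> B * A = 1\<^sub>m (dim_row A))"

definition Br :: "monom list \<Rightarrow> monom set" where
  "Br b1 = {x1m + \<beta> | \<beta>. \<beta> \<in> set b1} - set b1"

definition Be :: "monom list \<Rightarrow> monom list \<Rightarrow> monom set" where
  "Be b1 b2 = set b2 - Br b1"

definition idx :: "monom list \<Rightarrow> monom \<Rightarrow> nat" where
  "idx bs m = (THE k. k < length bs \<and> bs ! k = m)"

(* action matrix read-off from the Gauss-Jordan form R = [I G] of the template
   (columns indexed by b2 then b1; rws of G indexed by b2, C'_23 = rws indexed by B_r) *)
definition action_mat :: "monom list \<Rightarrow> monom list \<Rightarrow> complex mat \<Rightarrow> complex mat" where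
  "action_mat b1 b2 R = mat (length b1) (length b1) (\<lambda>(j,l).
     if x1m + b1 ! j \<in> set b1 then (if b1 ! l = x1m + b1 ! j then 1 else 0)
     else if x1m + b1 ! j \<in> Br b1 then - R $$ (idx b2 (x1m + b1 ! j), length b2 + l)
     else undefined)"

end

theory Submission
  imports Defs
begin

lemma col_hcat: assumes "A \<in> carrier_mat nr a" "B \<in> carrier_mat nr b" "j < a + b"
  shows "col (hcat A B) j = (if j < a then col A j else col B (j - a))"
  using assms by (intro eq_vecI) (auto simp: hcat_def)

lemma hcat_index: "i < dim_row A \<Longrightarrow> j < dim_col A \<Longrightarrow> hcat A B $$ (i,j) = A $$ (i,j)"
  by (simp add: hcat_def)

lemma hcat_carrier: assumes "A \<in> carrier_mat nr a" "B \<in> carrier_mat nr b"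
  shows "hcat A B \<in> carrier_mat nr (a + b)"
  using assms by (auto simp: hcat_def)

lemma mult_hcat: assumes P: "P \<in> carrier_mat m nr" and A: "A \<in> carrier_mat nr a" and B: "B \<in> carrier_mat nr b"
  shows "P * hcat A B = hcat (P * A) (P * B)"
proof (rule eq_matI)
  show "dim_row (P * hcat A B) = dim_row (hcat (P * A) (P * B))" using assms by (simp add: hcat_def)
  show "dim_col (P * hcat A B) = dim_col (hcat (P * A) (P * B))" using assms by (simp add: hcat_def)
  fix i j assume i: "i < dim_row (hcat (P * A) (P * B))" and j: "j < dim_col (hcat (P * A) (P * B))"
  hence i': "i < m" and j': "j < a + b" using assms by (auto simp: hcat_def)
  show "(P * hcat A B) $$ (i, j) = hcat (P * A) (P * B) $$ (i, j)"
    using i' j' assms col_hcat[OF A B j'] by (auto simp: hcat_def)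
qed

lemma ref_left_block: assumes C: "C \<in> carrier_mat N (N + k)" and ref: "row_echelon_form C"
  shows "row_echelon_form (mat N N (\<lambda>(i,j). C $$ (i,j)))"
proof -
  from ref C obtain f where pf: "pivot_fun C f (N + k)" unfolding row_echelon_form_def by auto
  have d: "dim_row C = N" using C by auto
  note p = pivot_funD[OF d pf]
  let ?L = "mat N N (\<lambda>(i,j). C $$ (i,j))"
  have "pivot_fun ?L (\<lambda>i. min (f i) N) N"
  proof (rule pivot_funI)
    show "dim_row ?L = N" by simp
    fix i assume i: "i < N"
    show "min (f i) N \<le> N" by simp
    { fix j assume "j < min (f i) N" thus "?L $$ (i,j) = 0" using p(2)[OF i, of j] i by auto }
    { assume "Suc i < N"
      thus "min (f i) N < min (f (Suc i)) N \<or> min (f (Suc i)) N = N"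
        using p(3)[OF i] by auto }
    { assume "min (f i) N < N" thus "?L $$ (i, min (f i) N) = 1" using p(4)[OF i] i by auto }
    { fix i' assume "min (f i) N < N" "i' < N" "i' \<noteq> i"
      thus "?L $$ (i', min (f i) N) = 0" using p(5)[OF i, of i'] i by auto }
  qed
  thus ?thesis unfolding row_echelon_form_def by auto
qed

lemma invertible_carrier: assumes "invertible_mat (A :: complex mat)" "A \<in> carrier_mat N N"
  obtains B where "B \<in> carrier_mat N N" "A * B = 1\<^sub>m N" "B * A = 1\<^sub>m N"
proof -
  from assms obtain B where 1: "A * B = 1\<^sub>m N" and 2: "B * A = 1\<^sub>m (dim_row B)"
    unfolding invertible_mat_def inverts_mat_def by auto
  have "dim_col B = N" using 1 by (metis dim_col_mat(1) index_mult_mat(3) index_one_mat(3))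
  moreover have "dim_row B = N" using 2 assms(2)
    by (metis carrier_matD(2) index_mult_mat(3) index_one_mat(3))
  ultimately show ?thesis using that 1 2 by auto
qed

lemma inv_m_eq: assumes A: "A \<in> carrier_mat N N" and B: "B \<in> carrier_mat N N"
  and 1: "A * B = 1\<^sub>m N" and 2: "B * A = 1\<^sub>m N"
  shows "inv_m A = B"
  unfolding inv_m_def
proof (rule the_equality)
  show "B \<in> carrier_mat (dim_row A) (dim_row A) \<and> A * B = 1\<^sub>m (dim_row A) \<and> B * A = 1\<^sub>m (dim_row A)"
    using assms by auto
  fix B' assume "B' \<in> carrier_mat (dim_row A) (dim_row A) \<and> A * B' = 1\<^sub>m (dim_row A) \<and> B' * A = 1\<^sub>m (dim_row A)"
  hence B': "B' \<in> carrier_mat N N" "A * B' = 1\<^sub>m N" "B' * A = 1\<^sub>m N" using A by auto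
  have "B' = B' * (A * B)" using 1 B' by simp
  also have "\<dots> = (B' * A) * B" using A B B' by (metis assoc_mult_mat)
  also have "\<dots> = B" using 2 B' B by simp
  finally show "B' = B" .
qed

lemma gj_part: assumes A12: "A12 \<in> carrier_mat N N" and A11: "A11 \<in> carrier_mat N k"
  and inv: "invertible_mat (A12 :: complex mat)"
  shows "gauss_jordan_single (hcat A12 A11) = hcat (1\<^sub>m N) (inv_m A12 * A11)"
proof -
  let ?C = "gauss_jordan_single (hcat A12 A11)"
  have H: "hcat A12 A11 \<in> carrier_mat N (N + k)" using hcat_carrier[OF A12 A11] .
  note g = gauss_jordan_single[OF H refl]
  from g(4) obtain P Q where P: "?C = P * hcat A12 A11" "P \<in> carrier_mat N N" "Q \<in> carrier_mat N N"
    "P * Q = 1\<^sub>m N" "Q * P = 1\<^sub>m N" by auto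
  obtain B where B: "B \<in> carrier_mat N N" "A12 * B = 1\<^sub>m N" "B * A12 = 1\<^sub>m N"
    using invertible_carrier[OF inv A12] by blast
  have C: "?C = hcat (P * A12) (P * A11)" using P mult_hcat[OF P(2) A12 A11] by simp
  let ?L = "P * A12"
  have Lc: "?L \<in> carrier_mat N N" using P A12 by auto
  have "?L = mat N N (\<lambda>(i,j). ?C $$ (i,j))"
  proof (rule eq_matI)
    fix i j assume ij: "i < dim_row (mat N N (\<lambda>(i,j). ?C $$ (i,j)))" "j < dim_col (mat N N (\<lambda>(i,j). ?C $$ (i,j)))"
    hence i: "i < N" and j: "j < N" by auto
    have dPA: "dim_row (P * A12) = N" "dim_col (P * A12) = N" "dim_col (P * A11) = k" using Lc P A11 by auto
    have "?C $$ (i,j) = (P * A12) $$ (i,j)" unfolding C using i j dPA by (simp add: hcat_index)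
    thus "?L $$ (i, j) = mat N N (\<lambda>(i,j). ?C $$ (i,j)) $$ (i, j)" using i j by simp
  qed (use Lc in auto)
  hence refL: "row_echelon_form ?L" using ref_left_block[OF g(2) g(3)] by simp
  have LI: "?L * (B * Q) = 1\<^sub>m N"
  proof -
    have e1: "?L * (B * Q) = P * (A12 * (B * Q))"
      by (rule assoc_mult_mat[of P N N A12 N "B * Q"]) (use P A12 B in auto)
    have e2: "(A12 * B) * Q = A12 * (B * Q)"
      by (rule assoc_mult_mat[of A12 N N B N Q]) (use P A12 B in auto)
    have "A12 * (B * Q) = Q" using e2 B P by simp
    thus ?thesis using e1 P by simp
  qed
  have "?L = 1\<^sub>m N"
  proof -
    from row_echelon_form_imp_1_or_0_row[OF Lc refL]
    show ?thesis
    proof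
      assume a: "0 < N \<and> row ?L (N - 1) = 0\<^sub>v N"
      let ?n = "N - 1"
      have n: "?n < N" using a by auto
      have BQ: "B * Q \<in> carrier_mat N N" using B P by auto
      have "1 = 1\<^sub>m N $$ (?n,?n)" using n by simp
      also have "\<dots> = (?L * (B * Q)) $$ (?n, ?n)" using LI by simp
      also have "\<dots> = row ?L ?n \<bullet> col (B * Q) ?n" by (rule index_mult_mat(1)) (use n Lc BQ in auto)
      also have "\<dots> = 0" using a BQ n by simp
      finally show ?thesis by simp
    qed
  qed
  hence PA: "P * A12 = 1\<^sub>m N" .
  have "P = P * (A12 * B)" using B P by simp
  also have "\<dots> = (P * A12) * B" using P A12 B by (metis assoc_mult_mat)
  also have "\<dots> = B" using PA B by simp
  finally have PB: "P = B" .
  have "inv_m A12 = B" using inv_m_eq[OF A12 B] .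
  thus ?thesis using C PA PB by simp
qed

lemma lower_lookup: "j < length b1 \<Longrightarrow> Poly_Mapping.lookup (lower_polys b1 ! j) c = (if c = x1m + b1 ! j then 1 else 0)"
  by (simp add: lower_polys_def x1_def mono_def mult_single lookup_single when_def)

lemma length_lower[simp]: "length (lower_polys b1) = length b1"
  by (simp add: lower_polys_def)

lemma idx_eq: assumes "distinct bs" "k < length bs" shows "idx bs (bs ! k) = k"
  unfolding idx_def using assms by (intro the_equality) (auto simp: nth_eq_iff_index_eq)

theorem proposition3:
  fixes n m r :: nat
    and fs :: "cpoly list"
    and rws :: "(nat \<times> monom) list"
    and b1 b2 :: "monom list"
    and A11 A12 A21 A22 X Chat :: "complex mat"
  assumes n_pos: "1 \<le> n"
    and f_len: "length fs = m"
    and f_polys: "\<forall>i<m. fs ! i \<in> polys_in n"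
    and B_distinct: "distinct (b1 @ b2)"
    and B_monoms: "\<forall>\<beta>\<in>set b1 \<union> set b2. is_monom_in n \<beta>"
    and B1_def: "set b1 = {\<beta> \<in> set b1 \<union> set b2. x1m + \<beta> \<in> set b1 \<union> set b2}"
    and r_def: "length b1 = r"
    and basis: "quotient_basis n fs b1"
    and rows_ok: "\<forall>(i,t)\<in>set rws. i < m \<and> is_monom_in n t"
    and rows_distinct: "distinct rws"
    and rows_supp: "\<forall>p\<in>set (upper_polys fs rws). Poly_Mapping.keys p \<subseteq> set b1 \<union> set b2"
    and square: "dim_row (res_mat fs rws b1 b2 0) = dim_col (res_mat fs rws b1 b2 0)"
    and A11_def: "A11 = coeff_mat (upper_polys fs rws) b1"
    and A12_def: "A12 = coeff_mat (upper_polys fs rws) b2"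
    and A21_def: "A21 = coeff_mat (lower_polys b1) b1"
    and A22_def: "A22 = coeff_mat (lower_polys b1) b2"
    and A12_sq: "dim_row A12 = dim_col A12"
    and A12_inv: "invertible_mat A12"
    and X_def: "X = A21 - A22 * (inv_m A12 * A11)"
    and Chat_def: "Chat = hcat A12 A11"
  shows "gauss_jordan_single Chat = hcat (1\<^sub>m (length b2)) (inv_m A12 * A11)
         \<and> action_mat b1 b2 (gauss_jordan_single Chat) = X"
proof -
  define N where "N = length b2"
  have dA12: "A12 \<in> carrier_mat N N" using A12_sq unfolding A12_def N_def coeff_mat_def by auto
  have dA11: "A11 \<in> carrier_mat N r" using A12_sq unfolding A11_def A12_def N_def coeff_mat_def r_def[symmetric] by auto
  have dA21: "A21 \<in> carrier_mat r r" unfolding A21_def coeff_mat_def lower_polys_def r_def[symmetric] by auto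
  have dA22: "A22 \<in> carrier_mat r N" unfolding A22_def coeff_mat_def lower_polys_def r_def[symmetric] N_def by auto
  have GJ: "gauss_jordan_single Chat = hcat (1\<^sub>m (length b2)) (inv_m A12 * A11)"
    unfolding Chat_def N_def[symmetric] by (rule gj_part[OF dA12 dA11 A12_inv])
  define G where "G = inv_m A12 * A11"
  obtain B where B: "B \<in> carrier_mat N N" "A12 * B = 1\<^sub>m N" "B * A12 = 1\<^sub>m N"
    using invertible_carrier[OF A12_inv dA12] by blast
  have "inv_m A12 = B" using inv_m_eq[OF dA12 B] .
  hence dG: "G \<in> carrier_mat N r" unfolding G_def using B dA11 by auto
  have d1: "distinct b1" "distinct b2" and disj: "set b1 \<inter> set b2 = {}" using B_distinct by auto
  have "action_mat b1 b2 (hcat (1\<^sub>m N) G) = X"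
  proof (rule eq_matI)
    show "dim_row (action_mat b1 b2 (hcat (1\<^sub>m N) G)) = dim_row X"
      "dim_col (action_mat b1 b2 (hcat (1\<^sub>m N) G)) = dim_col X"
      using dA21 dA22 dG dA11 unfolding X_def action_mat_def r_def G_def by auto
    fix j l assume "j < dim_row X" "l < dim_col X"
    hence j: "j < r" and l: "l < r" using dA21 dA22 dG dA11 unfolding X_def G_def by auto
    have Xjl: "X $$ (j,l) = A21 $$ (j,l) - (\<Sum>k\<in>{0..<N}. A22 $$ (j,k) * G $$ (k,l))"
      unfolding X_def G_def[symmetric] using j l dA21 dA22 dG by (simp add: scalar_prod_def)
    have A21e: "A21 $$ (j,l) = (if b1 ! l = x1m + b1 ! j then 1 else 0)"
      unfolding A21_def coeff_mat_def using j l r_def lower_lookup[of j b1] by simp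
    have A22e: "\<And>k. k < N \<Longrightarrow> A22 $$ (j,k) = (if b2 ! k = x1m + b1 ! j then 1 else 0)"
      unfolding A22_def coeff_mat_def using j r_def lower_lookup[of j b1] N_def
      by simp
    have bj: "b1 ! j \<in> set b1" using j r_def by auto
    show "action_mat b1 b2 (hcat (1\<^sub>m N) G) $$ (j, l) = X $$ (j, l)"
    proof (cases "x1m + b1 ! j \<in> set b1")
      case True
      have "\<And>k. k < N \<Longrightarrow> A22 $$ (j,k) = 0"
        using A22e True disj N_def by (metis IntI empty_iff nth_mem)
      hence "(\<Sum>k\<in>{0..<N}. A22 $$ (j,k) * G $$ (k,l)) = 0" by simp
      thus ?thesis using True Xjl A21e j l r_def unfolding action_mat_def by auto
    next
      case False
      have in2: "x1m + b1 ! j \<in> set b2" using bj False B1_def by blast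
      have inBr: "x1m + b1 ! j \<in> Br b1" using False bj unfolding Br_def by blast
      obtain k0 where k0: "k0 < N" "b2 ! k0 = x1m + b1 ! j" using in2 N_def by (metis in_set_conv_nth)
      have ix: "idx b2 (x1m + b1 ! j) = k0" using idx_eq[OF d1(2), of k0] k0 N_def by simp
      have "A21 $$ (j,l) = 0" using A21e False l r_def by (metis nth_mem)
      moreover have "(\<Sum>k\<in>{0..<N}. A22 $$ (j,k) * G $$ (k,l)) = (\<Sum>k\<in>{0..<N}. if k = k0 then G $$ (k,l) else 0)"
      proof (intro sum.cong refl)
        fix k assume "k \<in> {0..<N}"
        hence k: "k < N" by simp
        have "(b2 ! k = x1m + b1 ! j) = (k = k0)" using k k0 d1(2) N_def
          by (metis nth_eq_iff_index_eq)
        thus "A22 $$ (j,k) * G $$ (k,l) = (if k = k0 then G $$ (k,l) else 0)"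
          using A22e[OF k] by simp
      qed
      moreover have "\<dots> = G $$ (k0, l)" using k0 by simp
      ultimately have "X $$ (j,l) = - G $$ (k0, l)" using Xjl by simp
      thus ?thesis using False inBr ix k0 j l r_def dG unfolding action_mat_def hcat_def N_def by auto
    qed
  qed
  thus ?thesis using GJ unfolding G_def N_def by simp
qed

end
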